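(* For $\mathsf{BST}^{\otimes}$-conjunctions, finite satisfiability and hereditarily finite satisfiability are equivalent: a $\mathsf{BST}^{\otimes}$-conjunction has a finite model if and only if it has a hereditarily finite model. Moreover, a $\mathsf{BST}^{\otimes}$-conjunction with $n$ variables is (hereditarily) finitely satisfiable if and only if it is fulfilled by an accessible $\otimes$-graph of size at most $2^{n}-1$ that admits a topological $\otimes$-order.
   Context: Sets range over the von Neumann universe of well-founded sets; $\mathsf{HF}$ denotes the set of hereditarily finite sets. For sets $s,t$, $s\otimes t=\{\{u,v\} : u\in s,\ v\in t\}$. A set assignment $M$ maps variables to sets; it satisfies a formula if the formula is true when each variable $v$ is interpreted as $Mv$. A $\mathsf{BST}^{\otimes}$-conjunction is a finite conjunction of literals of the forms $x=y\cup z$, $x=y\setminus z$, $x=y\otimes z$, $x\neq y$ ($x,y,z$ set variables). It is finitely (resp. hereditarily finitely) satisfiable if it is satisfied by some set assignment $M$ on its variables with $\bigcup_v Mv$ finite (resp. $\bigcup_v Mv\in\mathsf{HF}$). A $\otimes$-graph $\mathcal G=(\mathcal P,\mathcal N,\mathcal T)$ consists of a set $\mathcal P$ of places, the set of nodes $\mathcal N=\mathcal P\otimes\mathcal P$ (the nonempty subsets of $\mathcal P$ with at most two elements), $\mathcal P\cap\mathcal N=\emptyset$, and a target map $\mathcal T:\mathcal N\to\mathcal P(\mathcal P)$. Size of $\mathcal G$ is $|\mathcal P|$. A source place is a place belonging to no $\mathcal T(A)$; a node $A$ is a $\otimes$-node if $\mathcal T(A)\neq\emptyset$. The accessible places form the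 smallest set of places containing all source places and containing $\mathcal T(A)$ whenever all places of $A$ belong to it; $\mathcal G$ is accessible if every place is accessible. A topological $\otimes$-order of $\mathcal G$ is a total order $\prec$ on $\mathcal P$ such that $\max_\prec A\prec\max_\prec\mathcal T(A)$ for every $\otimes$-node $A$. A map $\mathfrak F:\mathrm{Vars}(\Phi)\to\mathcal P(\mathcal P)$ is $\mathcal G$-fulfilling for $\Phi$ if: (a) $\mathfrak F(x)=\mathfrak F(y)\star\mathfrak F(z)$ for each conjunct $x=y\star z$, $\star\in\{\cup,\setminus\}$; (b) $\mathfrak F(x)\neq\mathfrak F(y)$ for each conjunct $x\neq y$; (c) for each conjunct $x=y\otimes z$: (c1) $\emptyset\neq\mathcal T(\{\upsilon,\zeta\})\subseteq\mathfrak F(x)$ for all $\upsilon\in\mathfrak F(y),\zeta\in\mathfrak F(z)$; (c2) $\mathfrak F(x)\subseteq\bigcup\{\mathcal T(A):A\in\mathfrak F(y)\otimes\mathfrak F(z)\}$; (c3) $\bigcup\{\mathcal T(A):A\in\mathcal N\setminus(\mathfrak F(y)\otimes\mathfrak F(z))\}\cap\mathfrak F(x)=\emptyset$. $\mathcal G$ fulfills $\Phi$ if such a map exists. *)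

theory Defs
  imports Main
begin

text \<open>The von Neumann
  universe (restricted to any set-sized transitive fragment containing HF) is such
  a structure.\<close>

definition set_universe :: "('u \<Rightarrow> 'u \<Rightarrow> bool) \<Rightarrow> bool" where
  "set_universe mem \<longleftrightarrow>
     wfp mem \<and>
     (\<forall>x y. (\<forall>z. mem z x \<longleftrightarrow> mem z y) \<longrightarrow> x = y) \<and>
     (\<forall>S. finite S \<longrightarrow> (\<exists>x. \<forall>z. mem z x \<longleftrightarrow> z \<in> S))"

definition elems :: "('u \<Rightarrow> 'u \<Rightarrow> bool) \<Rightarrow> 'u \<Rightarrow> 'u set" where
  "elems mem x = {z. mem z x}"

datatype 'v literal =
    LUn 'v 'v 'v
  | LDiff 'v 'v 'v
  | LTens 'v 'v 'v
  | LNeq 'v 'v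

fun lit_vars :: "'v literal \<Rightarrow> 'v set" where
  "lit_vars (LUn x y z) = {x, y, z}"
| "lit_vars (LDiff x y z) = {x, y, z}"
| "lit_vars (LTens x y z) = {x, y, z}"
| "lit_vars (LNeq x y) = {x, y}"

definition vars :: "'v literal list \<Rightarrow> 'v set" where
  "vars \<Phi> = (\<Union>l\<in>set \<Phi>. lit_vars l)"

definition set_otimes :: "'a set \<Rightarrow> 'a set \<Rightarrow> 'a set set" where
  "set_otimes s t = {{u, v} | u v. u \<in> s \<and> v \<in> t}"

fun sat_lit :: "('u \<Rightarrow> 'u \<Rightarrow> bool) \<Rightarrow> ('v \<Rightarrow> 'u) \<Rightarrow> 'v literal \<Rightarrow> bool" where
  "sat_lit mem M (LUn x y z) \<longleftrightarrow> elems mem (M x) = elems mem (M y) \<union> elems mem (M z)"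
| "sat_lit mem M (LDiff x y z) \<longleftrightarrow> elems mem (M x) = elems mem (M y) - elems mem (M z)"
| "sat_lit mem M (LTens x y z) \<longleftrightarrow>
     elems mem (M x) = {w. \<exists>u v. mem u (M y) \<and> mem v (M z) \<and> elems mem w = {u, v}}"
| "sat_lit mem M (LNeq x y) \<longleftrightarrow> M x \<noteq> M y"

definition satisfies :: "('u \<Rightarrow> 'u \<Rightarrow> bool) \<Rightarrow> ('v \<Rightarrow> 'u) \<Rightarrow> 'v literal list \<Rightarrow> bool" where
  "satisfies mem M \<Phi> \<longleftrightarrow> (\<forall>l\<in>set \<Phi>. sat_lit mem M l)"

definition fin_sat :: "('u \<Rightarrow> 'u \<Rightarrow> bool) \<Rightarrow> 'v literal list \<Rightarrow> bool" where
  "fin_sat mem \<Phi> \<longleftrightarrow>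
     (\<exists>M. satisfies mem M \<Phi> \<and> finite (\<Union>v\<in>vars \<Phi>. elems mem (M v)))"

text \<open>Hereditarily finitely satisfiable: \<Union>_v M v \<in> HF, i.e. (membership being
  well-founded) the transitive closure of \<Union>_v M v is finite.\<close>
definition hf_sat :: "('u \<Rightarrow> 'u \<Rightarrow> bool) \<Rightarrow> 'v literal list \<Rightarrow> bool" where
  "hf_sat mem \<Phi> \<longleftrightarrow>
     (\<exists>M. satisfies mem M \<Phi> \<and>
          finite {z. \<exists>v\<in>vars \<Phi>. mem\<^sup>+\<^sup>+ z (M v)})"

text \<open>Places are natural numbers; nodes are (HOL) sets of places, so places and
  nodes are automatically disjoint.\<close>

definition nodes :: "nat set \<Rightarrow> nat set set" where
  "nodes P = set_otimes P P"

definition otimes_graph :: "nat set \<Rightarrow> (nat set \<Rightarrow> nat set) \<Rightarrow> bool" where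
  "otimes_graph P T \<longleftrightarrow> finite P \<and> (\<forall>A\<in>nodes P. T A \<subseteq> P)"

definition source_place :: "nat set \<Rightarrow> (nat set \<Rightarrow> nat set) \<Rightarrow> nat \<Rightarrow> bool" where
  "source_place P T p \<longleftrightarrow> p \<in> P \<and> (\<forall>A\<in>nodes P. p \<notin> T A)"

inductive_set accessible_places :: "nat set \<Rightarrow> (nat set \<Rightarrow> nat set) \<Rightarrow> nat set"
  for P T where
  src: "source_place P T p \<Longrightarrow> p \<in> accessible_places P T"
| step: "A \<in> nodes P \<Longrightarrow> (\<forall>a\<in>A. a \<in> accessible_places P T) \<Longrightarrow> p \<in> T A
          \<Longrightarrow> p \<in> accessible_places P T"

definition accessible :: "nat set \<Rightarrow> (nat set \<Rightarrow> nat set) \<Rightarrow> bool" where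
  "accessible P T \<longleftrightarrow> P \<subseteq> accessible_places P T"

definition max_wrt :: "(nat \<times> nat) set \<Rightarrow> nat set \<Rightarrow> nat" where
  "max_wrt R A = (THE m. m \<in> A \<and> (\<forall>a\<in>A. a \<noteq> m \<longrightarrow> (a, m) \<in> R))"

definition topological_order :: "nat set \<Rightarrow> (nat set \<Rightarrow> nat set) \<Rightarrow> (nat \<times> nat) set \<Rightarrow> bool" where
  "topological_order P T R \<longleftrightarrow>
     strict_linear_order_on P R \<and> R \<subseteq> P \<times> P \<and>
     (\<forall>A\<in>nodes P. T A \<noteq> {} \<longrightarrow> (max_wrt R A, max_wrt R (T A)) \<in> R)"

fun fulfills_lit :: "nat set \<Rightarrow> (nat set \<Rightarrow> nat set) \<Rightarrow> ('v \<Rightarrow> nat set) \<Rightarrow> 'v literal \<Rightarrow> bool" where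
  "fulfills_lit P T F (LUn x y z) \<longleftrightarrow> F x = F y \<union> F z"
| "fulfills_lit P T F (LDiff x y z) \<longleftrightarrow> F x = F y - F z"
| "fulfills_lit P T F (LNeq x y) \<longleftrightarrow> F x \<noteq> F y"
| "fulfills_lit P T F (LTens x y z) \<longleftrightarrow>
     (\<forall>u\<in>F y. \<forall>w\<in>F z. T {u, w} \<noteq> {} \<and> T {u, w} \<subseteq> F x) \<and>
     F x \<subseteq> (\<Union>A\<in>set_otimes (F y) (F z). T A) \<and>
     (\<Union>A\<in>nodes P - set_otimes (F y) (F z). T A) \<inter> F x = {}"

definition fulfilling :: "nat set \<Rightarrow> (nat set \<Rightarrow> nat set) \<Rightarrow> ('v \<Rightarrow> nat set) \<Rightarrow> 'v literal list \<Rightarrow> bool" where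
  "fulfilling P T F \<Phi> \<longleftrightarrow>
     (\<forall>v\<in>vars \<Phi>. F v \<subseteq> P) \<and> (\<forall>l\<in>set \<Phi>. fulfills_lit P T F l)"

definition fulfills :: "nat set \<Rightarrow> (nat set \<Rightarrow> nat set) \<Rightarrow> 'v literal list \<Rightarrow> bool" where
  "fulfills P T \<Phi> \<longleftrightarrow> (\<exists>F. fulfilling P T F \<Phi>)"

end

theory Submission
  imports Defs
begin

locale univ =
  fixes mem :: "'u \<Rightarrow> 'u \<Rightarrow> bool"
  assumes su: "set_universe mem"
begin

lemma wf: "wfp mem" using su unfolding set_universe_def by blast

lemma ext: "elems mem x = elems mem y \<Longrightarrow> x = y"
  using su unfolding set_universe_def elems_def by (metis mem_Collect_eq)

lemma irr: "\<not> mem x x"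
  using wfp_imp_irreflp[OF wf] by (simp add: irreflp_def)

definition mk :: "'u set \<Rightarrow> 'u" where "mk S = (SOME x. elems mem x = S)"

lemma elems_mk: "finite S \<Longrightarrow> elems mem (mk S) = S"
proof -
  assume "finite S"
  then obtain x where "\<forall>z. mem z x \<longleftrightarrow> z \<in> S" using su unfolding set_universe_def by blast
  hence "elems mem x = S" unfolding elems_def by auto
  thus ?thesis unfolding mk_def by (rule someI)
qed

definition pr :: "'u \<Rightarrow> 'u \<Rightarrow> 'u" where "pr u v = mk {u, v}"

lemma elems_pr: "elems mem (pr u v) = {u, v}" unfolding pr_def by (simp add: elems_mk)

lemma pr_eq: "elems mem w = {u, v} \<Longrightarrow> w = pr u v"
  by (rule ext) (simp add: elems_pr)

lemma pr_inj: "pr u v = pr u' v' \<Longrightarrow> {u, v} = {u', v'}"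
  by (metis elems_pr)

lemma pr_sym: "pr u v = pr v u" unfolding pr_def by (simp add: insert_commute)

lemma mem_pr: "mem u (pr u v)" "mem v (pr u v)"
  using elems_pr unfolding elems_def by auto

definition hf :: "'u \<Rightarrow> bool" where "hf x \<longleftrightarrow> finite {z. mem\<^sup>+\<^sup>+ z x}"

lemma tc_sub: "{z. mem\<^sup>+\<^sup>+ z x} \<subseteq> elems mem x \<union> (\<Union>s\<in>elems mem x. {z. mem\<^sup>+\<^sup>+ z s})"
proof
  fix z assume "z \<in> {z. mem\<^sup>+\<^sup>+ z x}"
  hence "mem\<^sup>+\<^sup>+ z x" by simp
  thus "z \<in> elems mem x \<union> (\<Union>s\<in>elems mem x. {z. mem\<^sup>+\<^sup>+ z s})"
    by (cases rule: tranclp.cases) (auto simp: elems_def)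
qed

lemma hf_elems: "finite (elems mem x) \<Longrightarrow> \<forall>s\<in>elems mem x. hf s \<Longrightarrow> hf x"
  unfolding hf_def using tc_sub[of x] by (meson finite_UN_I finite_Un finite_subset)

lemma hf_mk: "finite S \<Longrightarrow> \<forall>s\<in>S. hf s \<Longrightarrow> hf (mk S)"
  by (rule hf_elems) (simp_all add: elems_mk)

lemma hf_pr: "hf u \<Longrightarrow> hf v \<Longrightarrow> hf (pr u v)"
  unfolding pr_def by (rule hf_mk) auto

lemma hf_mem: "hf x \<Longrightarrow> mem s x \<Longrightarrow> hf s"
  unfolding hf_def by (rule finite_subset[rotated], assumption) (auto intro: tranclp_into_tranclp2[rotated] tranclp.r_into_trancl)

lemma elems_sub_tc: "elems mem x \<subseteq> {z. mem\<^sup>+\<^sup>+ z x}"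
  unfolding elems_def by auto

lemma hf_finite: "hf x \<Longrightarrow> finite (elems mem x)"
  unfolding hf_def using elems_sub_tc finite_subset by blast

fun vn :: "nat \<Rightarrow> 'u" where
  "vn 0 = mk {}"
| "vn (Suc n) = mk (insert (vn n) (elems mem (vn n)))"

lemma vn_props: "elems mem (vn n) = vn ` {..<n} \<and> card (elems mem (vn n)) = n \<and> hf (vn n)"
proof (induction n)
  case 0
  then show ?case by (simp add: elems_mk hf_mk)
next
  case (Suc n)
  have fin: "finite (elems mem (vn n))" using Suc by simp
  have e: "elems mem (vn (Suc n)) = insert (vn n) (elems mem (vn n))"
    using fin by (simp add: elems_mk)
  have nm: "vn n \<notin> elems mem (vn n)" using irr unfolding elems_def by auto
  have "vn ` {..<Suc n} = insert (vn n) (vn ` {..<n})" by (simp add: lessThan_Suc)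
  moreover have "hf (vn (Suc n))"
    using Suc fin unfolding vn.simps by (intro hf_mk) (auto simp: elems_def intro: hf_mem)
  moreover have "card (elems mem (vn (Suc n))) = Suc n"
    unfolding e using fin nm Suc.IH by (metis card_insert_disjoint)
  ultimately show ?case using e Suc.IH by (simp del: vn.simps)
qed

lemma vn_inj: "inj vn"
  by (rule injI) (metis vn_props)

definition atoms :: "'u set" where "atoms = vn ` {3..}"

lemma atoms_infinite: "infinite atoms"
  unfolding atoms_def using vn_inj
  by (metis finite_imageD infinite_Ici inj_on_subset subset_UNIV)

lemma atoms_hf: "x \<in> atoms \<Longrightarrow> hf x" unfolding atoms_def using vn_props by auto

lemma atom_not_pr: "x \<in> atoms \<Longrightarrow> x \<noteq> pr u v"
proof
  assume "x \<in> atoms" "x = pr u v"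
  then obtain n where "n \<ge> 3" "x = vn n" unfolding atoms_def by auto
  hence "card (elems mem x) \<ge> 3" using vn_props[of n] by metis
  moreover have "card (elems mem x) \<le> 2" using \<open>x = pr u v\<close> elems_pr
    by (simp add: card_insert_le_m1)
  ultimately show False by simp
qed

end

lemma max_wrt_props:
  assumes slo: "strict_linear_order_on P R" and AP: "A \<subseteq> P" and fin: "finite A" and ne: "A \<noteq> {}"
  shows "max_wrt R A \<in> A \<and> (\<forall>a\<in>A. a \<noteq> max_wrt R A \<longrightarrow> (a, max_wrt R A) \<in> R)"
proof -
  have tr: "trans R" and ir: "irrefl R" and tot: "total_on P R"
    using slo unfolding strict_linear_order_on_def by auto
  have ex: "\<exists>m. m \<in> A \<and> (\<forall>a\<in>A. a \<noteq> m \<longrightarrow> (a, m) \<in> R)"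
    using fin ne AP
  proof (induction A rule: finite_ne_induct)
    case (singleton x) then show ?case by auto
  next
    case (insert x F)
    then obtain m where m: "m \<in> F" "\<forall>a\<in>F. a \<noteq> m \<longrightarrow> (a, m) \<in> R" by auto
    have "x \<in> P" "m \<in> P" using insert m by auto
    show ?case
    proof (cases "(m, x) \<in> R")
      case True
      have "\<forall>a\<in>insert x F. a \<noteq> x \<longrightarrow> (a, x) \<in> R"
      proof
        fix a assume "a \<in> insert x F"
        show "a \<noteq> x \<longrightarrow> (a, x) \<in> R"
        proof (cases "a = m")
          case False
          thus ?thesis using m \<open>a \<in> insert x F\<close> True tr by (auto dest: transD)
        qed (use True in auto)
      qed
      then show ?thesis by blast
    next
      case False
      hence "(x, m) \<in> R" using tot \<open>x \<in> P\<close> \<open>m \<in> P\<close> insert.hyps m(1) unfolding total_on_def by metis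
      then show ?thesis using m by auto
    qed
  qed
  have uniq: "m = m'" if "m \<in> A \<and> (\<forall>a\<in>A. a \<noteq> m \<longrightarrow> (a, m) \<in> R)"
      "m' \<in> A \<and> (\<forall>a\<in>A. a \<noteq> m' \<longrightarrow> (a, m') \<in> R)" for m m'
  proof (rule ccontr)
    assume "m \<noteq> m'"
    hence "(m, m') \<in> R" "(m', m) \<in> R" using that by auto
    hence "(m, m) \<in> R" using tr by (auto dest: transD)
    thus False using ir unfolding irrefl_def by auto
  qed
  show ?thesis unfolding max_wrt_def
    by (rule theI'[of "\<lambda>m. m \<in> A \<and> (\<forall>a\<in>A. a \<noteq> m \<longrightarrow> (a, m) \<in> R)"]) (use ex uniq in blast)
qed

lemma nodes_iff: "A \<in> nodes P \<longleftrightarrow> (\<exists>a b. A = {a, b} \<and> a \<in> P \<and> b \<in> P)"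
  unfolding nodes_def set_otimes_def by auto

lemma acc_step:
  assumes og: "otimes_graph P T" and acc: "accessible P T" and DP: "D \<subseteq> P" and ne: "D \<noteq> P"
  shows "\<exists>q\<in>P - D. source_place P T q \<or> (\<exists>A\<in>nodes P. A \<subseteq> D \<and> q \<in> T A)"
proof (rule ccontr)
  assume H: "\<not> ?thesis"
  have "p \<in> D" if "p \<in> accessible_places P T" for p
    using that
  proof (induction rule: accessible_places.induct)
    case (src p)
    then show ?case using H unfolding source_place_def by auto
  next
    case (step A p)
    have "p \<in> P" using og step unfolding otimes_graph_def by auto
    then show ?case using H step by auto
  qed
  hence "P \<subseteq> D" using acc unfolding accessible_def by auto
  thus False using DP ne by auto
qed


context univ begin

definition good :: "nat set \<Rightarrow> (nat set \<Rightarrow> nat set) \<Rightarrow> nat \<Rightarrow> nat set \<Rightarrow> (nat \<Rightarrow> 'u set) \<Rightarrow> bool" where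
 "good P T m D core \<longleftrightarrow> D \<subseteq> P \<and> (\<forall>p\<in>D. finite (core p) \<and> card (core p) = m) \<and>
    (\<forall>p\<in>D. \<forall>p'\<in>D. p \<noteq> p' \<longrightarrow> core p \<inter> core p' = {}) \<and> (\<forall>p\<in>D. \<forall>e\<in>core p. hf e) \<and>
    (\<forall>p\<in>D. source_place P T p \<longrightarrow> core p \<subseteq> atoms) \<and>
    (\<forall>p\<in>D. \<not> source_place P T p \<longrightarrow> (\<forall>e\<in>core p. \<exists>u v a b. a\<in>D \<and> b\<in>D \<and> u\<in>core a \<and> v\<in>core b \<and> e = pr u v \<and> p \<in> T{a,b}))"

lemma goodD:
  assumes "good P T m D core"
  shows "D \<subseteq> P" "\<And>p. p\<in>D \<Longrightarrow> finite (core p)" "\<And>p. p\<in>D \<Longrightarrow> card (core p) = m"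
    "\<And>p p'. p\<in>D \<Longrightarrow> p'\<in>D \<Longrightarrow> p \<noteq> p' \<Longrightarrow> core p \<inter> core p' = {}"
    "\<And>p e. p\<in>D \<Longrightarrow> e\<in>core p \<Longrightarrow> hf e"
    "\<And>p. p\<in>D \<Longrightarrow> source_place P T p \<Longrightarrow> core p \<subseteq> atoms"
    "\<And>p e. p\<in>D \<Longrightarrow> \<not> source_place P T p \<Longrightarrow> e\<in>core p \<Longrightarrow> \<exists>u v a b. a\<in>D \<and> b\<in>D \<and> u\<in>core a \<and> v\<in>core b \<and> e = pr u v \<and> p \<in> T{a,b}"
  using assms unfolding good_def by blast+

lemma core_ind:
  assumes og: "otimes_graph P T" and acc: "accessible P T"
  shows "j \<le> card P \<Longrightarrow> \<exists>D core. card D = j \<and> good P T (4 * card P) D core"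
proof (induction j)
  case 0
  show ?case by (rule exI[of _ "{}"], rule exI[of _ "\<lambda>_. {}"]) (simp add: good_def)
next
  case (Suc j)
  let ?k = "card P" let ?m = "4 * card P"
  have finP: "finite P" using og unfolding otimes_graph_def by auto
  obtain D core where cD: "card D = j" and g: "good P T ?m D core" using Suc by auto
  note gd = goodD[OF g]
  have DP: "D \<subseteq> P" using gd(1) .
  have finD: "finite D" using DP finP finite_subset by blast
  have DneP: "D \<noteq> P" using cD Suc.prems by auto
  obtain q where qP: "q \<in> P" and qD: "q \<notin> D" and
    qc: "source_place P T q \<or> (\<exists>A\<in>nodes P. A \<subseteq> D \<and> q \<in> T A)"
    using acc_step[OF og acc DP DneP] by auto
  define Used where "Used = (\<Union>p\<in>D. core p)"
  have finU: "finite Used" unfolding Used_def using gd(2) finD by auto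
  have cU: "card Used \<le> j * ?m"
  proof -
    have "card Used \<le> (\<Sum>p\<in>D. card (core p))" unfolding Used_def by (rule card_UN_le[OF finD])
    also have "\<dots> = (\<Sum>p\<in>D. ?m)" using gd(3) by (intro sum.cong) auto
    finally show ?thesis using cD by simp
  qed
  have jk: "j < ?k" using Suc.prems by simp
  have key: "\<exists>C. finite C \<and> card C = ?m \<and> C \<inter> Used = {} \<and> (\<forall>e\<in>C. hf e) \<and>
      (source_place P T q \<longrightarrow> C \<subseteq> atoms) \<and>
      (\<not> source_place P T q \<longrightarrow> (\<forall>e\<in>C. \<exists>u v a b. a\<in>D \<and> b\<in>D \<and> u\<in>core a \<and> v\<in>core b \<and> e = pr u v \<and> q \<in> T{a,b}))"
  proof (cases "source_place P T q")
    case True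
    have "infinite (atoms - Used)" using atoms_infinite finU by (rule Diff_infinite_finite[rotated])
    then obtain C where C: "finite C" "card C = ?m" "C \<subseteq> atoms - Used"
      using infinite_arbitrarily_large by blast
    show ?thesis
    proof (rule exI[of _ C], intro conjI)
      show "\<forall>e\<in>C. hf e" using C(3) atoms_hf by blast
      show "C \<inter> Used = {}" using C(3) by blast
      show "source_place P T q \<longrightarrow> C \<subseteq> atoms" using C(3) by blast
    qed (use C True in simp_all)
  next
    case False
    then obtain A where A: "A \<in> nodes P" "A \<subseteq> D" "q \<in> T A" using qc by auto
    then obtain a b where ab: "A = {a, b}" "a \<in> D" "b \<in> D" unfolding nodes_iff by auto
    have ca: "finite (core a)" "card (core a) = ?m" and cb: "finite (core b)" "card (core b) = ?m"
      using gd(2,3) ab by auto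
    obtain C1 where C1: "C1 \<subseteq> core a" "card C1 = 2 * ?k" "finite C1"
      using obtain_subset_with_card_n[of "2 * ?k" "core a"] ca by auto
    have "card (core b) \<le> card (core b - C1 \<union> C1)"
      by (rule card_mono) (use cb(1) C1(3) in auto)
    also have "\<dots> \<le> card (core b - C1) + card C1" by (rule card_Un_le)
    finally have "card (core b) \<le> card (core b - C1) + card C1" .
    hence "2 * ?k \<le> card (core b - C1)" using cb C1 by simp
    then obtain C2 where C2: "C2 \<subseteq> core b - C1" "card C2 = 2 * ?k" "finite C2"
      using obtain_subset_with_card_n[of "2 * ?k" "core b - C1"] by auto
    define X where "X = (\<lambda>(u, v). pr u v) ` (C1 \<times> C2)"
    have inj: "inj_on (\<lambda>(u, v). pr u v) (C1 \<times> C2)"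
    proof (rule inj_onI, clarify)
      fix u v u' v' assume h: "u \<in> C1" "v \<in> C2" "u' \<in> C1" "v' \<in> C2" "pr u v = pr u' v'"
      hence "{u, v} = {u', v'}" using pr_inj by blast
      moreover have "u \<noteq> v'" "v \<noteq> u'" using h C2 by auto
      ultimately show "u = u' \<and> v = v'" by (metis doubleton_eq_iff)
    qed
    have cX: "card X = ?m * ?k" unfolding X_def using card_image[OF inj] C1 C2
      by (simp add: card_cartesian_product)
    have "card X - card Used \<le> card (X - Used)" by (rule diff_card_le_card_Diff[OF finU])
    moreover have "?m \<le> card X - card Used"
    proof -
      have "Suc j * ?m \<le> ?k * ?m" using jk by (intro mult_le_mono1) simp
      hence "j * ?m + ?m \<le> ?k * ?m" by simp
      thus ?thesis using cX cU by (simp add: mult.commute)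
    qed
    ultimately obtain C where C: "C \<subseteq> X - Used" "card C = ?m" "finite C"
      using obtain_subset_with_card_n[of ?m "X - Used"] by (metis (no_types, lifting) le_trans)
    have hfc: "\<forall>e\<in>core p. hf e" if "p \<in> D" for p using gd(5) that by auto
    show ?thesis
    proof (rule exI[of _ C], intro conjI)
      show "\<forall>e\<in>C. hf e"
      proof
        fix e assume "e \<in> C"
        then obtain u v where "u \<in> C1" "v \<in> C2" "e = pr u v" using C unfolding X_def by auto
        thus "hf e" using hfc ab C1 C2 hf_pr by blast
      qed
      show "\<not> source_place P T q \<longrightarrow> (\<forall>e\<in>C. \<exists>u v a b. a\<in>D \<and> b\<in>D \<and> u\<in>core a \<and> v\<in>core b \<and> e = pr u v \<and> q \<in> T{a,b})"
      proof (intro impI ballI)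
        fix e assume "e \<in> C"
        then obtain u v where "u \<in> C1" "v \<in> C2" "e = pr u v" using C unfolding X_def by auto
        thus "\<exists>u v a b. a\<in>D \<and> b\<in>D \<and> u\<in>core a \<and> v\<in>core b \<and> e = pr u v \<and> q \<in> T{a,b}"
          using ab(2,3) A(3) C1(1) C2(1) unfolding ab(1) by blast
      qed
      show "finite C" by (rule C(3))
      show "card C = ?m" by (rule C(2))
      show "C \<inter> Used = {}" using C(1) by blast
      show "source_place P T q \<longrightarrow> C \<subseteq> atoms" using False by simp
    qed
  qed
  then obtain C where C: "finite C" "card C = ?m" "C \<inter> Used = {}" "\<forall>e\<in>C. hf e"
      "source_place P T q \<longrightarrow> C \<subseteq> atoms"
      "\<not> source_place P T q \<longrightarrow> (\<forall>e\<in>C. \<exists>u v a b. a\<in>D \<and> b\<in>D \<and> u\<in>core a \<and> v\<in>core b \<and> e = pr u v \<and> q \<in> T{a,b})"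
    using key by (elim exE conjE) (rule that; assumption)
  define core' where "core' = core(q := C)"
  have "good P T ?m (insert q D) core'"
    unfolding good_def
  proof (intro conjI)
    show "insert q D \<subseteq> P" using DP qP by auto
    show "\<forall>p\<in>insert q D. finite (core' p) \<and> card (core' p) = ?m"
      using gd(2,3) C(1,2) unfolding core'_def by auto
    show "\<forall>p\<in>insert q D. \<forall>p'\<in>insert q D. p \<noteq> p' \<longrightarrow> core' p \<inter> core' p' = {}"
    proof (intro ballI impI)
      fix p p' assume pp: "p \<in> insert q D" "p' \<in> insert q D" "p \<noteq> p'"
      have dj: "core x \<inter> C = {}" if "x \<in> D" for x using C(3) that unfolding Used_def by blast
      show "core' p \<inter> core' p' = {}"
      proof (cases "p = q")
        case True
        then show ?thesis using pp dj unfolding core'_def by (simp add: Int_commute)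
      next
        case False
        note pf = this
        show ?thesis
        proof (cases "p' = q")
          case True
          then show ?thesis using pp pf dj unfolding core'_def by simp
        next
          case False
          then show ?thesis using pp pf gd(4) unfolding core'_def by simp
        qed
      qed
    qed
    show "\<forall>p\<in>insert q D. \<forall>e\<in>core' p. hf e"
      using gd(5) C(4) unfolding core'_def by auto
    show "\<forall>p\<in>insert q D. source_place P T p \<longrightarrow> core' p \<subseteq> atoms"
      using gd(6) C(5) unfolding core'_def by auto
    show "\<forall>p\<in>insert q D. \<not> source_place P T p \<longrightarrow> (\<forall>e\<in>core' p. \<exists>u v a b. a\<in>insert q D \<and> b\<in>insert q D \<and>
         u\<in>core' a \<and> v\<in>core' b \<and> e = pr u v \<and> p \<in> T{a,b})"
    proof (intro ballI impI)
      fix p e assume p: "p \<in> insert q D" "\<not> source_place P T p" "e \<in> core' p"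
      show "\<exists>u v a b. a\<in>insert q D \<and> b\<in>insert q D \<and> u\<in>core' a \<and> v\<in>core' b \<and> e = pr u v \<and> p \<in> T{a,b}"
      proof (cases "p = q")
        case True
        have eC: "e \<in> C" using p True unfolding core'_def by simp
        have ns: "\<not> source_place P T q" using p(2) True by simp
        obtain u v a b where "a\<in>D" "b\<in>D" "u\<in>core a" "v\<in>core b" "e = pr u v" "p \<in> T{a,b}"
          using C(6) ns eC True by blast
        moreover have "a \<noteq> q" "b \<noteq> q" using qD \<open>a\<in>D\<close> \<open>b\<in>D\<close> by auto
        ultimately show ?thesis unfolding core'_def by (intro exI[of _ u] exI[of _ v] exI[of _ a] exI[of _ b]) simp
      next
        case False
        hence "p \<in> D" "e \<in> core p" using p unfolding core'_def by auto
        then obtain u v a b where "a\<in>D" "b\<in>D" "u\<in>core a" "v\<in>core b" "e = pr u v" "p \<in> T{a,b}"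
          using gd(7) p(2) by blast
        moreover have "a \<noteq> q" "b \<noteq> q" using qD \<open>a\<in>D\<close> \<open>b\<in>D\<close> by auto
        ultimately show ?thesis unfolding core'_def by (intro exI[of _ u] exI[of _ v] exI[of _ a] exI[of _ b]) simp
      qed
    qed
  qed
  moreover have "card (insert q D) = Suc j" using cD qD finD by simp
  ultimately show ?case by blast
qed

lemma core_exists:
  assumes og: "otimes_graph P T" and acc: "accessible P T"
  shows "\<exists>core. good P T (4 * card P) P core"
proof -
  obtain D core where c: "card D = card P" and g: "good P T (4 * card P) D core"
    using core_ind[OF og acc, of "card P"] by auto
  have "finite P" using og unfolding otimes_graph_def by auto
  hence "D = P" using card_subset_eq[OF _ goodD(1)[OF g] c] by blast
  thus ?thesis using \<open>good P T (4 * card P) D core\<close> by blast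
qed

end

locale constr = univ mem for mem :: "'u \<Rightarrow> 'u \<Rightarrow> bool" +
  fixes P :: "nat set" and T :: "nat set \<Rightarrow> nat set" and R :: "(nat \<times> nat) set" and core :: "nat \<Rightarrow> 'u set"
  assumes og: "otimes_graph P T" and topo: "topological_order P T R"
    and gc: "good P T (4 * card P) P core"
begin

lemmas gd = goodD[OF gc]

lemma finP: "finite P" using og unfolding otimes_graph_def by auto
lemma slo: "strict_linear_order_on P R" using topo unfolding topological_order_def by auto
lemma RP: "R \<subseteq> P \<times> P" using topo unfolding topological_order_def by auto
lemma top: "A \<in> nodes P \<Longrightarrow> T A \<noteq> {} \<Longrightarrow> (max_wrt R A, max_wrt R (T A)) \<in> R"
  using topo unfolding topological_order_def by auto
lemma TP: "A \<in> nodes P \<Longrightarrow> T A \<subseteq> P" using og unfolding otimes_graph_def by auto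
lemma trR: "trans R" using slo unfolding strict_linear_order_on_def by auto

lemma node_ab: "a \<in> P \<Longrightarrow> b \<in> P \<Longrightarrow> {a, b} \<in> nodes P"
  unfolding nodes_iff by auto

lemma maxT: assumes "a \<in> P" "b \<in> P" "T {a, b} \<noteq> {}"
  shows "max_wrt R (T {a, b}) \<in> T {a, b}" "max_wrt R (T {a, b}) \<in> P"
proof -
  have s: "T {a, b} \<subseteq> P" using TP node_ab assms by auto
  hence "finite (T {a, b})" using finP by (rule finite_subset)
  thus "max_wrt R (T {a, b}) \<in> T {a, b}" using max_wrt_props[OF slo s] assms by blast
  thus "max_wrt R (T {a, b}) \<in> P" using s by blast
qed

inductive_set E :: "('u \<times> nat) set" where
  ce: "p \<in> P \<Longrightarrow> e \<in> core p \<Longrightarrow> (e, p) \<in> E"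
| ge: "(u, a) \<in> E \<Longrightarrow> (v, b) \<in> E \<Longrightarrow> T {a, b} \<noteq> {} \<Longrightarrow> pr u v \<notin> (\<Union>p\<in>P. core p)
        \<Longrightarrow> (pr u v, max_wrt R (T {a, b})) \<in> E"

lemma E_P: "(e, p) \<in> E \<Longrightarrow> p \<in> P"
proof (induction rule: E.induct)
  case (ce p e) then show ?case by simp
next
  case (ge u a v b) then show ?case using maxT(2) by blast
qed

lemma E_hf: "(e, p) \<in> E \<Longrightarrow> hf e"
proof (induction rule: E.induct)
  case (ce p e) then show ?case using gd(5) by blast
next
  case (ge u a v b) then show ?case using hf_pr by blast
qed

lemma E_fun: "(e, p) \<in> E \<Longrightarrow> (e, p') \<in> E \<Longrightarrow> p = p'"
proof (induction e arbitrary: p p' rule: wfp_induct_rule[OF wf])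
  case (1 e)
  show ?case
  proof (cases "e \<in> (\<Union>p\<in>P. core p)")
    case True
    have "e \<in> core p" using "1.prems"(1) True by (cases rule: E.cases) auto
    moreover have "e \<in> core p'" using "1.prems"(2) True by (cases rule: E.cases) auto
    moreover have "p \<in> P" "p' \<in> P" using "1.prems" E_P by auto
    ultimately show ?thesis using gd(4) by blast
  next
    case False
    obtain u v a b where h1: "e = pr u v" "(u, a) \<in> E" "(v, b) \<in> E" "p = max_wrt R (T {a, b})"
      using "1.prems"(1) False by (cases rule: E.cases) auto
    obtain u' v' a' b' where h2: "e = pr u' v'" "(u', a') \<in> E" "(v', b') \<in> E" "p' = max_wrt R (T {a', b'})"
      using "1.prems"(2) False by (cases rule: E.cases) auto
    have uv: "{u, v} = {u', v'}" using h1(1) h2(1) pr_inj by metis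
    have mu: "mem u e" "mem v e" using h1(1) mem_pr by auto
    have "{a, b} = {a', b'}"
    proof (cases "u = u'")
      case True
      hence "v = v'" using uv by (metis doubleton_eq_iff)
      then show ?thesis using True "1.IH"[OF mu(1) h1(2)] "1.IH"[OF mu(2) h1(3)] h2 by auto
    next
      case False
      hence "u = v'" "v = u'" using uv by (metis doubleton_eq_iff)+
      then show ?thesis using "1.IH"[OF mu(1) h1(2)] "1.IH"[OF mu(2) h1(3)] h2 by auto
    qed
    then show ?thesis using h1(4) h2(4) by simp
  qed
qed

definition real :: "nat \<Rightarrow> 'u set" where "real p = {e. (e, p) \<in> E}"

lemma wfR: "wf R"
proof (rule finite_acyclic_wf)
  show "finite R" using finite_subset[OF RP finite_cartesian_product[OF finP finP]] .
  show "acyclic R" unfolding acyclic_irrefl using trR slo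
    by (simp add: strict_linear_order_on_def)
qed

lemma max2: assumes "a \<in> P" "b \<in> P"
  shows "a = max_wrt R {a, b} \<or> (a, max_wrt R {a, b}) \<in> R" "b = max_wrt R {a, b} \<or> (b, max_wrt R {a, b}) \<in> R"
proof -
  have s: "{a, b} \<subseteq> P" using assms by simp
  have "max_wrt R {a, b} \<in> {a, b} \<and> (\<forall>x\<in>{a, b}. x \<noteq> max_wrt R {a, b} \<longrightarrow> (x, max_wrt R {a, b}) \<in> R)"
    by (rule max_wrt_props[OF slo s]) simp_all
  thus "a = max_wrt R {a, b} \<or> (a, max_wrt R {a, b}) \<in> R" "b = max_wrt R {a, b} \<or> (b, max_wrt R {a, b}) \<in> R"
    by blast+
qed

lemma below_max: assumes "a \<in> P" "b \<in> P" "T {a, b} \<noteq> {}"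
  shows "(a, max_wrt R (T {a, b})) \<in> R" "(b, max_wrt R (T {a, b})) \<in> R"
proof -
  have m: "(max_wrt R {a, b}, max_wrt R (T {a, b})) \<in> R" using top[OF node_ab[OF assms(1,2)] assms(3)] .
  show "(a, max_wrt R (T {a, b})) \<in> R" using max2(1)[OF assms(1,2)] m trR by (metis transD)
  show "(b, max_wrt R (T {a, b})) \<in> R" using max2(2)[OF assms(1,2)] m trR by (metis transD)
qed

lemma real_out: "p \<notin> P \<Longrightarrow> real p = {}"
  unfolding real_def using E_P by blast

lemma real_fin: "finite (real p)"
proof (induction p rule: wf_induct_rule[OF wfR])
  case (1 p)
  show ?case
  proof (cases "p \<in> P")
    case False then show ?thesis using real_out by simp
  next
    case True
    let ?Y = "\<Union>a\<in>{a. (a, p) \<in> R}. real a"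
    have fR: "finite {a. (a, p) \<in> R}" by (rule finite_subset[of _ P]) (use RP finP in auto)
    have fY: "finite ?Y" using fR "1.IH" by blast
    have sub: "real p \<subseteq> core p \<union> (\<lambda>(u, v). pr u v) ` (?Y \<times> ?Y)"
    proof
      fix e assume "e \<in> real p"
      hence "(e, p) \<in> E" unfolding real_def by simp
      thus "e \<in> core p \<union> (\<lambda>(u, v). pr u v) ` (?Y \<times> ?Y)"
      proof (cases rule: E.cases)
        case (ce) then show ?thesis by blast
      next
        case (ge u a v b)
        have ab: "a \<in> P" "b \<in> P" using ge(3,4) E_P by blast+
        have "(a, p) \<in> R" "(b, p) \<in> R" using below_max[OF ab ge(5)] ge(2) by simp_all
        hence "u \<in> ?Y" "v \<in> ?Y" using ge(3,4) unfolding real_def by blast+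
        hence "(u, v) \<in> ?Y \<times> ?Y" by blast
        hence "pr u v \<in> (\<lambda>(u, v). pr u v) ` (?Y \<times> ?Y)" by (rule rev_image_eqI) simp
        then show ?thesis using ge(1) by blast
      qed
    qed
    have "finite (core p)" using gd(2) True .
    hence "finite (core p \<union> (\<lambda>(u, v). pr u v) ` (?Y \<times> ?Y))" using fY by simp
    thus ?thesis using sub by (rule finite_subset[rotated])
  qed
qed

end

context constr begin

lemma real_ne: assumes "p \<in> P" shows "real p \<noteq> {}"
proof -
  have "card P > 0" using assms finP by (auto simp: card_gt_0_iff)
  hence "card (core p) > 0" using gd(3)[OF assms] by simp
  hence "core p \<noteq> {}" by auto
  moreover have "core p \<subseteq> real p" unfolding real_def using ce[OF assms] by blast
  ultimately show ?thesis by blast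
qed

lemma R2: assumes "(e, q) \<in> E" "\<not> source_place P T q"
  shows "\<exists>u v a b. (u, a) \<in> E \<and> (v, b) \<in> E \<and> e = pr u v \<and> q \<in> T {a, b}"
  using assms(1)
proof (cases rule: E.cases)
  case ce
  then obtain u v a b where h: "a\<in>P" "b\<in>P" "u\<in>core a" "v\<in>core b" "e = pr u v" "q \<in> T{a,b}"
    using gd(7) assms(2) by blast
  have "(u, a) \<in> E" "(v, b) \<in> E" using E.ce h by auto
  then show ?thesis using h by blast
next
  case (ge u a v b)
  have ab: "a \<in> P" "b \<in> P" using ge(3,4) E_P by blast+
  have "q \<in> T {a, b}" using maxT(1)[OF ab ge(5)] ge(2) by simp
  then show ?thesis using ge by blast
qed

lemma R3: assumes u: "(u, a) \<in> E" and v: "(v, b) \<in> E" and ne: "T {a, b} \<noteq> {}"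
  shows "\<exists>q\<in>T {a, b}. (pr u v, q) \<in> E"
proof (cases "pr u v \<in> (\<Union>p\<in>P. core p)")
  case True
  then obtain q where q: "q \<in> P" "pr u v \<in> core q" by blast
  have ns: "\<not> source_place P T q"
  proof
    assume "source_place P T q"
    hence "pr u v \<in> atoms" using gd(6)[OF q(1)] q(2) by blast
    thus False using atom_not_pr by blast
  qed
  obtain u' v' a' b' where h: "a'\<in>P" "b'\<in>P" "u'\<in>core a'" "v'\<in>core b'" "pr u v = pr u' v'" "q \<in> T{a',b'}"
    using gd(7)[OF q(1) ns q(2)] by blast
  have E': "(u', a') \<in> E" "(v', b') \<in> E" using E.ce h by auto
  have uv: "{u, v} = {u', v'}" using h(5) pr_inj by blast
  have "{a, b} = {a', b'}"
  proof (cases "u = u'")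
    case True
    hence "v = v'" using uv by (metis doubleton_eq_iff)
    then show ?thesis using True E_fun[OF u] E_fun[OF v] E' by simp
  next
    case False
    hence "u = v'" "v = u'" using uv by (metis doubleton_eq_iff)+
    then show ?thesis using E_fun[OF u] E_fun[OF v] E' by (simp add: insert_commute)
  qed
  then show ?thesis using h(6) E.ce[OF q] by auto
next
  case False
  have ab: "a \<in> P" "b \<in> P" using u v E_P by blast+
  show ?thesis using E.ge[OF u v ne False] maxT(1)[OF ab ne] by blast
qed

definition UF :: "nat set \<Rightarrow> 'u set" where "UF S = (\<Union>p\<in>S. real p)"

lemma UF_iff: "e \<in> UF S \<longleftrightarrow> (\<exists>p\<in>S. (e, p) \<in> E)"
  unfolding UF_def real_def by blast

lemma UF_fin: "finite (UF S)"
proof -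
  have "UF S = UF (S \<inter> P)" unfolding UF_def using real_out by blast
  moreover have "finite (UF (S \<inter> P))" unfolding UF_def using finP real_fin by blast
  ultimately show ?thesis by simp
qed

lemma UF_hf: "e \<in> UF S \<Longrightarrow> hf e" using UF_iff E_hf by blast

definition MM :: "nat set \<Rightarrow> 'u" where "MM S = mk (UF S)"

lemma elems_MM: "elems mem (MM S) = UF S" unfolding MM_def using UF_fin elems_mk by blast

lemma hf_MM: "hf (MM S)" unfolding MM_def using UF_fin UF_hf hf_mk by blast

lemma UF_diff: "UF (A - B) = UF A - UF B"
proof (intro set_eqI)
  fix e show "e \<in> UF (A - B) \<longleftrightarrow> e \<in> UF A - UF B"
    unfolding Diff_iff UF_iff using E_fun by blast
qed

lemma UF_neq: assumes "A \<subseteq> P" "B \<subseteq> P" "A \<noteq> B" shows "MM A \<noteq> MM B"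
proof -
  obtain p where p: "p \<in> A - B \<or> p \<in> B - A" using assms(3) by blast
  hence pP: "p \<in> P" using assms by blast
  obtain e where e: "e \<in> real p" using real_ne[OF pP] by blast
  hence eE: "(e, p) \<in> E" unfolding real_def by simp
  have "e \<in> UF A \<longleftrightarrow> p \<in> A" unfolding UF_iff using E_fun eE by blast
  moreover have "e \<in> UF B \<longleftrightarrow> p \<in> B" unfolding UF_iff using E_fun eE by blast
  ultimately have "UF A \<noteq> UF B" using p by blast
  thus ?thesis using elems_MM by metis
qed

lemma tens_ok:
  assumes Fs: "Fx \<subseteq> P" "Fy \<subseteq> P" "Fz \<subseteq> P"
    and c1: "\<forall>u\<in>Fy. \<forall>w\<in>Fz. T {u, w} \<noteq> {} \<and> T {u, w} \<subseteq> Fx"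
    and c2: "Fx \<subseteq> (\<Union>A\<in>set_otimes Fy Fz. T A)"
    and c3: "(\<Union>A\<in>nodes P - set_otimes Fy Fz. T A) \<inter> Fx = {}"
  shows "elems mem (MM Fx) = {w. \<exists>u v. mem u (MM Fy) \<and> mem v (MM Fz) \<and> elems mem w = {u, v}}"
proof -
  have my: "mem u (MM S) \<longleftrightarrow> (\<exists>p\<in>S. (u, p) \<in> E)" for u S
    using elems_MM[of S] UF_iff[of u S] unfolding elems_def by blast
  show ?thesis
  proof (intro set_eqI iffI)
    fix w assume "w \<in> elems mem (MM Fx)"
    then obtain q where q: "q \<in> Fx" "(w, q) \<in> E" using elems_MM UF_iff by blast
    obtain A where A: "A \<in> set_otimes Fy Fz" "q \<in> T A" using c2 q(1) by blast
    have "A \<in> nodes P" using A(1) Fs unfolding nodes_def set_otimes_def by blast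
    have ns: "\<not> source_place P T q" using \<open>A \<in> nodes P\<close> A(2) unfolding source_place_def by blast
    obtain u v a b where h: "(u, a) \<in> E" "(v, b) \<in> E" "w = pr u v" "q \<in> T {a, b}"
      using R2[OF q(2) ns] by blast
    have ab: "a \<in> P" "b \<in> P" using h E_P by blast+
    have "{a, b} \<in> set_otimes Fy Fz"
    proof (rule ccontr)
      assume "{a, b} \<notin> set_otimes Fy Fz"
      hence "{a, b} \<in> nodes P - set_otimes Fy Fz" using node_ab[OF ab] by blast
      thus False using c3 h(4) q(1) by blast
    qed
    then obtain a' b' where ab': "{a, b} = {a', b'}" "a' \<in> Fy" "b' \<in> Fz"
      unfolding set_otimes_def by blast
    have ew: "elems mem w = {u, v}" using h(3) elems_pr by simp
    show "w \<in> {w. \<exists>u v. mem u (MM Fy) \<and> mem v (MM Fz) \<and> elems mem w = {u, v}}"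
    proof (cases "a = a' \<and> b = b'")
      case True
      hence "mem u (MM Fy)" "mem v (MM Fz)" using my h ab' by blast+
      then show ?thesis using ew by blast
    next
      case False
      hence "a = b'" "b = a'" using ab'(1) by (metis doubleton_eq_iff)+
      hence "mem v (MM Fy)" "mem u (MM Fz)" using my h ab' by blast+
      then show ?thesis using ew by (simp add: insert_commute) blast
    qed
  next
    fix w assume "w \<in> {w. \<exists>u v. mem u (MM Fy) \<and> mem v (MM Fz) \<and> elems mem w = {u, v}}"
    then obtain u v where uv: "mem u (MM Fy)" "mem v (MM Fz)" "elems mem w = {u, v}" by blast
    obtain a where a: "a \<in> Fy" "(u, a) \<in> E" using my uv(1) by blast
    obtain b where b: "b \<in> Fz" "(v, b) \<in> E" using my uv(2) by blast
    have c: "T {a, b} \<noteq> {}" "T {a, b} \<subseteq> Fx" using c1 a(1) b(1) by blast+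
    obtain q where "q \<in> T {a, b}" "(pr u v, q) \<in> E" using R3[OF a(2) b(2) c(1)] by blast
    moreover have "w = pr u v" using pr_eq uv(3) by blast
    ultimately have "w \<in> UF Fx" using c(2) UF_iff by blast
    thus "w \<in> elems mem (MM Fx)" using elems_MM by simp
  qed
qed

end

lemma finite_vars: "finite (vars \<Phi>)"
proof -
  have "finite (lit_vars l)" for l :: "'v literal" by (cases l) auto
  thus ?thesis unfolding vars_def by blast
qed

lemma lit_vars_sub: "l \<in> set \<Phi> \<Longrightarrow> lit_vars l \<subseteq> vars \<Phi>"
  unfolding vars_def by blast

lemma graph_hf:
  fixes mem :: "'u \<Rightarrow> 'u \<Rightarrow> bool" and \<Phi> :: "'v literal list"
  assumes su: "set_universe mem" and og: "otimes_graph P T" and acc: "accessible P T"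
    and topo: "topological_order P T R" and ful: "fulfills P T \<Phi>"
  shows "hf_sat mem \<Phi>"
proof -
  interpret univ mem by (rule univ.intro[OF su])
  obtain core where gc: "good P T (4 * card P) P core" using core_exists[OF og acc] by blast
  interpret constr mem P T R core by (rule constr.intro[OF univ.intro[OF su]]) (rule constr_axioms.intro[OF og topo gc])
  obtain F where F: "fulfilling P T F \<Phi>" using ful unfolding fulfills_def by blast
  have FP: "\<And>v. v \<in> vars \<Phi> \<Longrightarrow> F v \<subseteq> P" using F unfolding fulfilling_def by blast
  have Fl: "\<And>l. l \<in> set \<Phi> \<Longrightarrow> fulfills_lit P T F l" using F unfolding fulfilling_def by blast
  define M where "M = (\<lambda>v. MM (F v))"
  have sat: "satisfies mem M \<Phi>"
    unfolding satisfies_def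
  proof
    fix l assume l: "l \<in> set \<Phi>"
    have fl: "fulfills_lit P T F l" using Fl[OF l] .
    have lv: "\<And>v. v \<in> lit_vars l \<Longrightarrow> F v \<subseteq> P" using FP lit_vars_sub[OF l] by blast
    show "sat_lit mem M l"
    proof (cases l)
      case (LUn x y z)
      then show ?thesis using fl unfolding M_def by (simp add: elems_MM UF_def)
    next
      case (LDiff x y z)
      then show ?thesis using fl unfolding M_def by (simp add: elems_MM UF_diff)
    next
      case (LTens x y z)
      have "F x \<subseteq> P" "F y \<subseteq> P" "F z \<subseteq> P" using lv LTens by auto
      from tens_ok[OF this] show ?thesis using fl LTens unfolding M_def by simp
    next
      case (LNeq x y)
      have "F x \<subseteq> P" "F y \<subseteq> P" using lv LNeq by auto
      from UF_neq[OF this] show ?thesis using fl LNeq unfolding M_def by simp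
    qed
  qed
  have fm: "\<And>v. finite {z. mem\<^sup>+\<^sup>+ z (M v)}" using hf_MM unfolding M_def hf_def by simp
  have "finite (\<Union>v\<in>vars \<Phi>. {z. mem\<^sup>+\<^sup>+ z (M v)})"
    by (rule finite_UN_I[OF finite_vars fm])
  moreover have "{z. \<exists>v\<in>vars \<Phi>. mem\<^sup>+\<^sup>+ z (M v)} = (\<Union>v\<in>vars \<Phi>. {z. mem\<^sup>+\<^sup>+ z (M v)})" by blast
  ultimately show ?thesis unfolding hf_sat_def using sat by auto
qed


locale mdl = univ mem for mem :: "'u \<Rightarrow> 'u \<Rightarrow> bool" +
  fixes \<Phi> :: "'v literal list" and M :: "'v \<Rightarrow> 'u"
  assumes sat: "satisfies mem M \<Phi>"
    and finU: "finite (\<Union>v\<in>vars \<Phi>. elems mem (M v))"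
begin

abbreviation "V \<equiv> vars \<Phi>"
definition "U = (\<Union>v\<in>V. elems mem (M v))"
definition "pi w = {v\<in>V. mem w (M v)}"
definition "enc = (SOME f :: 'v set \<Rightarrow> nat. inj_on f (Pow V))"
definition "rho w = enc (pi w)"
definition "FF v = rho ` elems mem (M v)"
definition "PP = rho ` U"
definition "isT B \<longleftrightarrow> (\<exists>x y z. LTens x y z \<in> set \<Phi> \<and> B \<in> set_otimes (FF y) (FF z))"
definition "TT B = (if isT B then {rho w | w. w \<in> U \<and> (\<exists>u v. u \<in> U \<and> v \<in> U \<and> elems mem w = {u, v} \<and> B = {rho u, rho v})} else {})"

lemma finUU: "finite U" using finU unfolding U_def .

lemma enc_inj: "inj_on enc (Pow V)"
proof -
  have "finite (Pow V)" using finite_vars by simp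
  then obtain f :: "'v set \<Rightarrow> nat" where "inj_on f (Pow V)" using finite_imp_inj_to_nat_seg by blast
  thus ?thesis unfolding enc_def by (rule someI[where P="\<lambda>f. inj_on f (Pow V)"])
qed

lemma rho_eq: "rho u = rho w \<Longrightarrow> pi u = pi w"
  using enc_inj unfolding rho_def inj_on_def pi_def by blast

lemma memU: "v \<in> V \<Longrightarrow> mem u (M v) \<Longrightarrow> u \<in> U"
  unfolding U_def elems_def by blast

lemma memF: assumes "x \<in> V" "u \<in> U" shows "rho u \<in> FF x \<longleftrightarrow> mem u (M x)"
proof
  assume "rho u \<in> FF x"
  then obtain w where w: "mem w (M x)" "rho u = rho w" unfolding FF_def elems_def by blast
  have "pi u = pi w" using w(2) by (rule rho_eq)
  thus "mem u (M x)" using w(1) assms(1) unfolding pi_def by blast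
next
  assume "mem u (M x)" thus "rho u \<in> FF x" unfolding FF_def elems_def by blast
qed

lemma satl: "l \<in> set \<Phi> \<Longrightarrow> sat_lit mem M l" using sat unfolding satisfies_def by blast

lemma lv: "l \<in> set \<Phi> \<Longrightarrow> v \<in> lit_vars l \<Longrightarrow> v \<in> V" using lit_vars_sub by blast

lemma tens_mem:
  assumes l: "LTens x y z \<in> set \<Phi>"
  shows "mem w (M x) \<longleftrightarrow> (\<exists>u v. mem u (M y) \<and> mem v (M z) \<and> elems mem w = {u, v})"
proof -
  have "w \<in> elems mem (M x) \<longleftrightarrow> (\<exists>u v. mem u (M y) \<and> mem v (M z) \<and> elems mem w = {u, v})"
    using satl[OF l] by simp
  thus ?thesis unfolding elems_def[of mem "M x"] by simp
qed

lemma Tsub: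
  assumes l: "LTens x y z \<in> set \<Phi>" and a: "mem a (M y)" and b: "mem b (M z)"
    and w: "u \<in> U" "v \<in> U" "elems mem w = {u, v}" and e: "{rho a, rho b} = {rho u, rho v}"
  shows "mem w (M x)"
proof -
  have V: "x \<in> V" "y \<in> V" "z \<in> V" using lv[OF l] by auto
  have aU: "rho a \<in> FF y" "rho b \<in> FF z" unfolding FF_def elems_def using a b by blast+
  show ?thesis
  proof (cases "rho u = rho a \<and> rho v = rho b")
    case True
    hence "rho u \<in> FF y" "rho v \<in> FF z" using aU by simp_all
    hence "mem u (M y)" "mem v (M z)" using memF[OF V(2) w(1)] memF[OF V(3) w(2)] by simp_all
    then show ?thesis using tens_mem[OF l] w(3) by blast
  next
    case False
    hence "rho u = rho b" "rho v = rho a" using e by (auto simp: doubleton_eq_iff)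
    hence "rho u \<in> FF z" "rho v \<in> FF y" using aU by simp_all
    hence "mem u (M z)" "mem v (M y)" using memF[OF V(3) w(1)] memF[OF V(2) w(2)] by simp_all
    moreover have "elems mem w = {v, u}" using w(3) by (simp add: insert_commute)
    ultimately show ?thesis using tens_mem[OF l] by blast
  qed
qed

lemma FF_P: "v \<in> V \<Longrightarrow> FF v \<subseteq> PP"
  unfolding FF_def PP_def U_def by blast

lemma TT_P: "TT A \<subseteq> PP"
  unfolding TT_def PP_def by auto

lemma TT_I: "isT B \<Longrightarrow> w \<in> U \<Longrightarrow> u \<in> U \<Longrightarrow> v \<in> U \<Longrightarrow> elems mem w = {u, v} \<Longrightarrow> B = {rho u, rho v} \<Longrightarrow> rho w \<in> TT B"
  unfolding TT_def by simp blast

lemma TT_E: "r \<in> TT B \<Longrightarrow> isT B \<and> (\<exists>w u v. r = rho w \<and> w \<in> U \<and> u \<in> U \<and> v \<in> U \<and> elems mem w = {u, v} \<and> B = {rho u, rho v})"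
  unfolding TT_def by (cases "isT B") auto

lemma img2: "{u, v} = {u', v'} \<Longrightarrow> {f u, f v} = {f u', f v'}"
  by (auto simp: doubleton_eq_iff)

lemma FF_iff: "q \<in> FF v \<longleftrightarrow> (\<exists>w. mem w (M v) \<and> q = rho w)"
  unfolding FF_def elems_def by blast

lemma mem_elems: "mem w x \<longleftrightarrow> w \<in> elems mem x" unfolding elems_def by simp

lemma lit_un: assumes l: "LUn x y z \<in> set \<Phi>" shows "FF x = FF y \<union> FF z"
proof -
  have "elems mem (M x) = elems mem (M y) \<union> elems mem (M z)" using satl[OF l, unfolded sat_lit.simps] .
  thus ?thesis unfolding FF_def by (simp only: image_Un)
qed

lemma lit_diff: assumes l: "LDiff x y z \<in> set \<Phi>" shows "FF x = FF y - FF z"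
proof (intro set_eqI iffI)
  have V: "x \<in> V" "y \<in> V" "z \<in> V" using lv[OF l] by auto
  have e0: "elems mem (M x) = elems mem (M y) - elems mem (M z)" using satl[OF l, unfolded sat_lit.simps] .
  have e: "mem w (M x) \<longleftrightarrow> mem w (M y) \<and> \<not> mem w (M z)" for w
  proof -
    have "w \<in> elems mem (M x) \<longleftrightarrow> w \<in> elems mem (M y) - elems mem (M z)" by (simp only: e0)
    thus ?thesis unfolding elems_def by simp
  qed
  {
    fix q assume "q \<in> FF x"
    then obtain w where w: "mem w (M x)" "q = rho w" unfolding FF_iff by blast
    have wU: "w \<in> U" using memU[OF V(1) w(1)] .
    have "q \<in> FF y" unfolding FF_iff using w e by blast
    moreover have "q \<notin> FF z" using memF[OF V(3) wU] w e by simp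
    ultimately show "q \<in> FF y - FF z" by simp
  }
  {
    fix q assume q: "q \<in> FF y - FF z"
    hence "q \<in> FF y" by simp
    then obtain w where w: "mem w (M y)" "q = rho w" unfolding FF_iff by blast
    have wU: "w \<in> U" using memU[OF V(2) w(1)] .
    have "\<not> mem w (M z)" using memF[OF V(3) wU] w q by simp
    hence "mem w (M x)" using w e by simp
    thus "q \<in> FF x" unfolding FF_iff using w by blast
  }
qed

lemma lit_neq: assumes l: "LNeq x y \<in> set \<Phi>" shows "FF x \<noteq> FF y"
proof -
  have V: "x \<in> V" "y \<in> V" using lv[OF l] by auto
  have "M x \<noteq> M y" using satl[OF l] by simp
  hence "elems mem (M x) \<noteq> elems mem (M y)" using ext by blast
  then obtain w where w: "mem w (M x) \<noteq> mem w (M y)" unfolding elems_def by blast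
  have wU: "w \<in> U"
  proof (cases "mem w (M x)")
    case True then show ?thesis using memU[OF V(1)] by blast
  next
    case False then show ?thesis using w memU[OF V(2)] by blast
  qed
  have "(rho w \<in> FF x) \<noteq> (rho w \<in> FF y)" using memF[OF V(1) wU] memF[OF V(2) wU] w by simp
  thus ?thesis by blast
qed

lemma lit_tens: assumes l': "LTens x y z \<in> set \<Phi>"
  shows "(\<forall>u\<in>FF y. \<forall>w\<in>FF z. TT {u, w} \<noteq> {} \<and> TT {u, w} \<subseteq> FF x) \<and>
     FF x \<subseteq> (\<Union>A\<in>set_otimes (FF y) (FF z). TT A) \<and>
     (\<Union>A\<in>nodes PP - set_otimes (FF y) (FF z). TT A) \<inter> FF x = {}"
proof -
  have V: "x \<in> V" "y \<in> V" "z \<in> V" using lv[OF l'] by auto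
  have c1: "\<forall>u\<in>FF y. \<forall>w\<in>FF z. TT {u, w} \<noteq> {} \<and> TT {u, w} \<subseteq> FF x"
  proof (intro ballI conjI)
    fix p q assume p: "p \<in> FF y" and q: "q \<in> FF z"
    obtain a where a: "mem a (M y)" "p = rho a" using p unfolding FF_def elems_def by blast
    obtain b where b: "mem b (M z)" "q = rho b" using q unfolding FF_def elems_def by blast
    have it: "isT {p, q}" unfolding isT_def set_otimes_def using l' p q by blast
    have "mem (pr a b) (M x)" using tens_mem[OF l'] a b elems_pr by blast
    moreover have "a \<in> U" "b \<in> U" using a b memU V by blast+
    ultimately have "rho (pr a b) \<in> TT {p, q}"
      using TT_I[OF it memU[OF V(1)] _ _ elems_pr] a(2) b(2) by blast
    thus "TT {p, q} \<noteq> {}" by blast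
    show "TT {p, q} \<subseteq> FF x"
    proof
      fix r assume "r \<in> TT {p, q}"
      then obtain w u v where w: "r = rho w" "w \<in> U" "u \<in> U" "v \<in> U" "elems mem w = {u, v}" "{p, q} = {rho u, rho v}"
        using TT_E by blast
      have "mem w (M x)" using Tsub[OF l' a(1) b(1) w(3,4,5)] w(6) a(2) b(2) by simp
      thus "r \<in> FF x" using w(1) unfolding FF_def elems_def by blast
    qed
  qed
  have c2: "FF x \<subseteq> (\<Union>A\<in>set_otimes (FF y) (FF z). TT A)"
  proof
    fix r assume "r \<in> FF x"
    then obtain w where w: "mem w (M x)" "r = rho w" unfolding FF_def elems_def by blast
    then obtain u v where uv: "mem u (M y)" "mem v (M z)" "elems mem w = {u, v}" using tens_mem[OF l'] by blast
    have A: "{rho u, rho v} \<in> set_otimes (FF y) (FF z)" using uv unfolding set_otimes_def FF_def elems_def by blast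
    hence "isT {rho u, rho v}" unfolding isT_def using l' by blast
    moreover have "w \<in> U" "u \<in> U" "v \<in> U" using w uv memU V by blast+
    ultimately have "r \<in> TT {rho u, rho v}" using TT_I uv(3) w(2) by blast
    thus "r \<in> (\<Union>A\<in>set_otimes (FF y) (FF z). TT A)" using A by blast
  qed
  have c3: "(\<Union>A\<in>nodes PP - set_otimes (FF y) (FF z). TT A) \<inter> FF x = {}"
  proof (rule ccontr)
    assume "\<not> ?thesis"
    then obtain A r where A: "A \<notin> set_otimes (FF y) (FF z)" "r \<in> TT A" "r \<in> FF x" by blast
    obtain w u v where w: "r = rho w" "w \<in> U" "u \<in> U" "v \<in> U" "elems mem w = {u, v}" "A = {rho u, rho v}"
      using TT_E[OF A(2)] by blast
    have "mem w (M x)" using memF[OF V(1) w(2)] A(3) w(1) by simp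
    then obtain u' v' where uv: "mem u' (M y)" "mem v' (M z)" "elems mem w = {u', v'}" using tens_mem[OF l'] by blast
    have "A = {rho u', rho v'}" using w(5,6) uv(3) img2[of u v u' v' rho] by simp
    hence "A \<in> set_otimes (FF y) (FF z)" using uv unfolding set_otimes_def FF_def elems_def by blast
    thus False using A(1) by blast
  qed
  show ?thesis using c1 c2 c3 by blast
qed

lemma ful_lit: assumes l: "l \<in> set \<Phi>" shows "fulfills_lit PP TT FF l"
proof (cases l)
  case (LUn x y z) then show ?thesis using lit_un l by simp
next
  case (LDiff x y z) then show ?thesis using lit_diff l by simp
next
  case (LNeq x y) then show ?thesis using lit_neq l by simp
next
  case (LTens x y z) then show ?thesis using lit_tens l by simp
qed

end

context mdl begin

lemma finPP: "finite PP" unfolding PP_def using finUU by simp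

lemma og_PP: "otimes_graph PP TT"
  unfolding otimes_graph_def using finPP TT_P by blast

lemma card_PP: "card PP \<le> 2 ^ card V - 1"
proof -
  have "PP = enc ` (pi ` U)" unfolding PP_def rho_def by (simp add: image_image)
  hence "card PP \<le> card (pi ` U)" using card_image_le[of "pi ` U" enc] finUU by simp
  moreover have "pi ` U \<subseteq> Pow V - {{}}"
  proof
    fix s assume "s \<in> pi ` U"
    then obtain w where w: "w \<in> U" "s = pi w" by blast
    then obtain v where "v \<in> V" "mem w (M v)" unfolding U_def elems_def by blast
    hence "v \<in> s" using w unfolding pi_def by blast
    moreover have "s \<subseteq> V" using w unfolding pi_def by blast
    ultimately show "s \<in> Pow V - {{}}" by blast
  qed
  hence "card (pi ` U) \<le> card (Pow V - {{}})" using finite_vars by (intro card_mono) simp_all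
  moreover have "card (Pow V - {{}}) = 2 ^ card V - 1"
    using card_Pow[OF finite_vars[of \<Phi>]] by (simp add: card_Diff_singleton)
  ultimately show ?thesis by linarith
qed

lemma rhoP: "w \<in> U \<Longrightarrow> rho w \<in> PP" unfolding PP_def by blast

lemma acc_all: "w \<in> U \<Longrightarrow> rho w \<in> accessible_places PP TT"
proof (induction w rule: wfp_induct_rule[OF wf])
  case (1 w)
  show ?case
  proof (cases "\<exists>x y z. LTens x y z \<in> set \<Phi> \<and> mem w (M x)")
    case True
    then obtain x y z where l: "LTens x y z \<in> set \<Phi>" and wx: "mem w (M x)" by blast
    have V: "x \<in> V" "y \<in> V" "z \<in> V" using lv[OF l] by auto
    obtain u v where uv: "mem u (M y)" "mem v (M z)" "elems mem w = {u, v}"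
      using tens_mem[OF l] wx by blast
    have uU: "u \<in> U" "v \<in> U" using memU V uv by blast+
    have mw: "mem u w" "mem v w" using uv(3) unfolding elems_def by blast+
    have acc: "rho u \<in> accessible_places PP TT" "rho v \<in> accessible_places PP TT"
      using "1.IH"[OF mw(1) uU(1)] "1.IH"[OF mw(2) uU(2)] .
    have nd: "{rho u, rho v} \<in> nodes PP" using rhoP uU unfolding nodes_iff by blast
    have "isT {rho u, rho v}" unfolding isT_def set_otimes_def FF_iff using l uv by blast
    hence "rho w \<in> TT {rho u, rho v}" using TT_I "1.prems" uU uv(3) by blast
    then show ?thesis using accessible_places.step[OF nd] acc by blast
  next
    case False
    have "source_place PP TT (rho w)"
      unfolding source_place_def
    proof (intro conjI ballI notI)
      show "rho w \<in> PP" using rhoP "1.prems" .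
      fix A assume "A \<in> nodes PP" "rho w \<in> TT A"
      then obtain w' u v where w': "isT A" "rho w = rho w'" "w' \<in> U" "u \<in> U" "v \<in> U"
          "elems mem w' = {u, v}" "A = {rho u, rho v}"
        using TT_E by blast
      obtain x y z where l: "LTens x y z \<in> set \<Phi>" and A: "A \<in> set_otimes (FF y) (FF z)"
        using w'(1) unfolding isT_def by blast
      obtain p q where pq: "A = {p, q}" "p \<in> FF y" "q \<in> FF z" using A unfolding set_otimes_def by blast
      obtain a where a: "mem a (M y)" "p = rho a" using pq(2) unfolding FF_iff by blast
      obtain b where b: "mem b (M z)" "q = rho b" using pq(3) unfolding FF_iff by blast
      have "mem w' (M x)" using Tsub[OF l a(1) b(1) w'(4,5,6)] w'(7) pq(1) a(2) b(2) by simp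
      hence "rho w' \<in> FF x" unfolding FF_iff by blast
      hence "mem w (M x)" using memF[OF _ "1.prems"] lv[OF l] w'(2) by simp
      thus False using False l by blast
    qed
    then show ?thesis by (rule accessible_places.src)
  qed
qed

lemma acc_PP: "accessible PP TT"
  unfolding accessible_def
proof
  fix p assume "p \<in> PP"
  then obtain w where "w \<in> U" "p = rho w" unfolding PP_def by blast
  thus "p \<in> accessible_places PP TT" using acc_all by simp
qed

end

context mdl begin

definition "hh w = card {z\<in>U. mem\<^sup>+\<^sup>+ z w}"
definition "HH p = Max (hh ` {w\<in>U. rho w = p})"
definition "RR = {(p, q). p \<in> PP \<and> q \<in> PP \<and> (HH p < HH q \<or> (HH p = HH q \<and> p < q))}"

lemma hh_lt: assumes "u \<in> U" "mem u w" shows "hh u < hh w"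
proof -
  have irr: "\<not> mem\<^sup>+\<^sup>+ u u" using wfp_imp_irreflp[OF wfp_tranclp[OF wf]] by (simp add: irreflp_def)
  have "{z\<in>U. mem\<^sup>+\<^sup>+ z u} \<subset> {z\<in>U. mem\<^sup>+\<^sup>+ z w}"
  proof
    show "{z\<in>U. mem\<^sup>+\<^sup>+ z u} \<subseteq> {z\<in>U. mem\<^sup>+\<^sup>+ z w}"
      using assms(2) by (auto intro: tranclp.trancl_into_trancl)
    have "u \<in> {z\<in>U. mem\<^sup>+\<^sup>+ z w}" using assms by auto
    moreover have "u \<notin> {z\<in>U. mem\<^sup>+\<^sup>+ z u}" using irr by simp
    ultimately show "{z\<in>U. mem\<^sup>+\<^sup>+ z u} \<noteq> {z\<in>U. mem\<^sup>+\<^sup>+ z w}" by blast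
  qed
  moreover have "finite {z\<in>U. mem\<^sup>+\<^sup>+ z w}" using finUU by simp
  ultimately show ?thesis unfolding hh_def by (rule psubset_card_mono[rotated])
qed

lemma fin_fib: "finite {w\<in>U. rho w = p}" using finUU by simp

lemma HH_ge: "w \<in> U \<Longrightarrow> hh w \<le> HH (rho w)"
  unfolding HH_def by (rule Max_ge) (use fin_fib in auto)

lemma HH_att: assumes "p \<in> PP" shows "\<exists>w\<in>U. rho w = p \<and> hh w = HH p"
proof -
  have ne: "{w\<in>U. rho w = p} \<noteq> {}" using assms unfolding PP_def by blast
  have "HH p \<in> hh ` {w\<in>U. rho w = p}" unfolding HH_def using fin_fib ne by (intro Max_in) auto
  thus ?thesis by auto
qed

lemma slo_RR: "strict_linear_order_on PP RR"
  unfolding strict_linear_order_on_def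
proof (intro conjI)
  show "trans RR" unfolding trans_def RR_def by auto
  show "irrefl RR" unfolding irrefl_def RR_def by auto
  show "total_on PP RR" unfolding total_on_def RR_def by auto
qed

lemma RR_sub: "RR \<subseteq> PP \<times> PP" unfolding RR_def by auto

lemma trRR: "trans RR" using slo_RR unfolding strict_linear_order_on_def by blast

lemma top_RR: assumes nd: "A \<in> nodes PP" and ne: "TT A \<noteq> {}"
  shows "(max_wrt RR A, max_wrt RR (TT A)) \<in> RR"
proof -
  obtain r where "r \<in> TT A" using ne by blast
  hence it: "isT A" using TT_E by blast
  obtain x y z where l: "LTens x y z \<in> set \<Phi>" and A: "A \<in> set_otimes (FF y) (FF z)"
    using it unfolding isT_def by blast
  have V: "x \<in> V" "y \<in> V" "z \<in> V" using lv[OF l] by auto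
  obtain p q where pq: "A = {p, q}" "p \<in> FF y" "q \<in> FF z" using A unfolding set_otimes_def by blast
  obtain a where a: "mem a (M y)" "p = rho a" using pq(2) unfolding FF_iff by blast
  obtain b where b: "mem b (M z)" "q = rho b" using pq(3) unfolding FF_iff by blast
  have aU: "a \<in> U" "b \<in> U" using memU V a b by blast+
  have AP: "A \<subseteq> PP" using pq a b aU rhoP by blast
  have finA: "finite A" using pq by simp
  have mA: "max_wrt RR A \<in> A" using max_wrt_props[OF slo_RR AP finA] pq by blast
  have TP: "TT A \<subseteq> PP" by (rule TT_P)
  have finT: "finite (TT A)" using finPP TP finite_subset by blast
  have mT: "max_wrt RR (TT A) \<in> TT A" "\<forall>t\<in>TT A. t \<noteq> max_wrt RR (TT A) \<longrightarrow> (t, max_wrt RR (TT A)) \<in> RR"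
    using max_wrt_props[OF slo_RR TP finT ne] by blast+
  let ?m = "max_wrt RR A"
  have mP: "?m \<in> PP" using mA AP by blast
  obtain us where us: "us \<in> U" "rho us = ?m" "hh us = HH ?m" using HH_att[OF mP] by blast
  have "\<exists>w. w \<in> U \<and> rho w \<in> TT A \<and> mem us w"
  proof (cases "?m = p")
    case True
    hence "rho us \<in> FF y" using us pq by simp
    hence "mem us (M y)" using memF[OF V(2) us(1)] by simp
    hence wx: "mem (pr us b) (M x)" using tens_mem[OF l] b(1) elems_pr by blast
    have wU: "pr us b \<in> U" using memU[OF V(1) wx] .
    have "A = {rho us, rho b}" using pq True us b by simp
    hence "rho (pr us b) \<in> TT A" using TT_I[OF it wU us(1) aU(2) elems_pr] by simp
    thus ?thesis using wU mem_pr by blast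
  next
    case False
    hence mq: "?m = q" using mA pq by blast
    hence "rho us \<in> FF z" using us pq by simp
    hence "mem us (M z)" using memF[OF V(3) us(1)] by simp
    hence wx: "mem (pr a us) (M x)" using tens_mem[OF l] a(1) elems_pr by blast
    have wU: "pr a us \<in> U" using memU[OF V(1) wx] .
    have "A = {rho a, rho us}" using pq mq us a by simp
    hence "rho (pr a us) \<in> TT A" using TT_I[OF it wU aU(1) us(1) elems_pr] by simp
    thus ?thesis using wU mem_pr by blast
  qed
  then obtain w where w: "w \<in> U" "rho w \<in> TT A" "mem us w" by blast
  have "HH ?m < HH (rho w)" using hh_lt[OF us(1) w(3)] HH_ge[OF w(1)] us(3) by simp
  moreover have "\<And>s t. s \<in> PP \<Longrightarrow> t \<in> PP \<Longrightarrow> HH s < HH t \<Longrightarrow> (s, t) \<in> RR" unfolding RR_def by simp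
  ultimately have r1: "(?m, rho w) \<in> RR" using mP rhoP[OF w(1)] by blast
  show ?thesis
  proof (cases "rho w = max_wrt RR (TT A)")
    case True then show ?thesis using r1 by simp
  next
    case False
    hence "(rho w, max_wrt RR (TT A)) \<in> RR" using mT(2) w(2) by blast
    then show ?thesis using r1 trRR by (meson transD)
  qed
qed

lemma topo_RR: "topological_order PP TT RR"
  unfolding topological_order_def using slo_RR RR_sub top_RR by blast

end

lemma hf_fin: "hf_sat mem \<Phi> \<Longrightarrow> fin_sat mem \<Phi>"
proof -
  assume "hf_sat mem \<Phi>"
  then obtain M where s: "satisfies mem M \<Phi>" and f: "finite {z. \<exists>v\<in>vars \<Phi>. mem\<^sup>+\<^sup>+ z (M v)}"
    unfolding hf_sat_def by blast
  have "(\<Union>v\<in>vars \<Phi>. elems mem (M v)) \<subseteq> {z. \<exists>v\<in>vars \<Phi>. mem\<^sup>+\<^sup>+ z (M v)}"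
    unfolding elems_def by auto
  hence "finite (\<Union>v\<in>vars \<Phi>. elems mem (M v))" using f by (rule finite_subset)
  thus ?thesis unfolding fin_sat_def using s by blast
qed

lemma fin_graph:
  fixes mem :: "'u \<Rightarrow> 'u \<Rightarrow> bool" and \<Phi> :: "'v literal list"
  assumes su: "set_universe mem" and fs: "fin_sat mem \<Phi>"
  shows "\<exists>(P :: nat set) T. otimes_graph P T \<and> accessible P T \<and>
                card P \<le> 2 ^ card (vars \<Phi>) - 1 \<and>
                (\<exists>R. topological_order P T R) \<and> fulfills P T \<Phi>"
proof -
  obtain M where s: "satisfies mem M \<Phi>" and f: "finite (\<Union>v\<in>vars \<Phi>. elems mem (M v))"
    using fs unfolding fin_sat_def by blast
  interpret mdl mem \<Phi> M by (rule mdl.intro[OF univ.intro[OF su]]) (rule mdl_axioms.intro[OF s f])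
  have "fulfilling PP TT FF \<Phi>"
    unfolding fulfilling_def using FF_P ful_lit by blast
  hence "fulfills PP TT \<Phi>" unfolding fulfills_def by blast
  thus ?thesis using og_PP acc_PP card_PP topo_RR by blast
qed

theorem mainTheorem3:
  fixes mem :: "'u \<Rightarrow> 'u \<Rightarrow> bool" and \<Phi> :: "'v literal list"
  assumes "set_universe mem"
  shows "(fin_sat mem \<Phi> \<longleftrightarrow> hf_sat mem \<Phi>) \<and>
         (fin_sat mem \<Phi> \<longleftrightarrow>
            (\<exists>(P :: nat set) T. otimes_graph P T \<and> accessible P T \<and>
                card P \<le> 2 ^ card (vars \<Phi>) - 1 \<and>
                (\<exists>R. topological_order P T R) \<and> fulfills P T \<Phi>))"
proof -
  have gh: "hf_sat mem \<Phi>" if "\<exists>(P :: nat set) T. otimes_graph P T \<and> accessible P T \<and>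
                card P \<le> 2 ^ card (vars \<Phi>) - 1 \<and>
                (\<exists>R. topological_order P T R) \<and> fulfills P T \<Phi>"
    using that graph_hf[OF assms] by blast
  show ?thesis using hf_fin[of mem \<Phi>] fin_graph[OF assms, of \<Phi>] gh by blast
qed


end
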